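(* Let $G=(V,E)$ be a finite simple graph and $v\in V$. Let $G-v$ be the graph obtained from $G$ by deleting $v$ and all edges incident to $v$, and let $G/v$ be the graph obtained from $G$ by deleting $v$ and making the open neighbourhood $N_G(v)$ a clique (already adjacent pairs remain simply adjacent). Then $$\frac{\gamma_{coe}(G-v)+\gamma_{coe}(G/v)}{2}-\deg(v)+1\leq \gamma_{coe}(G)\leq \frac{\gamma_{coe}(G-v)+\gamma_{coe}(G/v)}{2}+\deg(v)+1.$$
   Context: All graphs are finite and simple. For a graph $G=(V,E)$ and $v\in V$, $N_G(v)=\{u\in V: uv\in E\}$ and $\deg(v)=|N_G(v)|$. A set $D\subseteq V$ is a dominating set if every vertex of $V\setminus D$ is adjacent to at least one vertex of $D$. A dominating set $D$ is a co-even dominating set if $\deg(v)$ is even for every $v\in V\setminus D$ (degrees taken in the graph under consideration). The co-even domination number $\gamma_{coe}(G)$ is the minimum cardinality of a co-even dominating set of $G$. *)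

theory Defs
  imports Complex_Main
begin

type_synonym 'a graph = "'a set \<times> 'a set set"

definition simple_graph :: "'a graph \<Rightarrow> bool" where
  "simple_graph G \<longleftrightarrow> finite (fst G) \<and>
     (\<forall>e\<in>snd G. e \<subseteq> fst G \<and> card e = 2)"

definition nbhd :: "'a graph \<Rightarrow> 'a \<Rightarrow> 'a set" where
  "nbhd G v = {u \<in> fst G. {u, v} \<in> snd G}"

definition degree :: "'a graph \<Rightarrow> 'a \<Rightarrow> nat" where
  "degree G v = card (nbhd G v)"

definition dominating_set :: "'a graph \<Rightarrow> 'a set \<Rightarrow> bool" where
  "dominating_set G D \<longleftrightarrow> D \<subseteq> fst G \<and>
     (\<forall>v \<in> fst G - D. \<exists>u \<in> D. {u, v} \<in> snd G)"

definition co_even_dominating_set :: "'a graph \<Rightarrow> 'a set \<Rightarrow> bool" where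
  "co_even_dominating_set G D \<longleftrightarrow> dominating_set G D \<and>
     (\<forall>v \<in> fst G - D. even (degree G v))"

definition gamma_coe :: "'a graph \<Rightarrow> nat" where
  "gamma_coe G = Min (card ` {D. co_even_dominating_set G D})"

definition delete_vertex :: "'a graph \<Rightarrow> 'a \<Rightarrow> 'a graph" where
  "delete_vertex G v = (fst G - {v}, {e \<in> snd G. v \<notin> e})"

definition contract_vertex :: "'a graph \<Rightarrow> 'a \<Rightarrow> 'a graph" where
  "contract_vertex G v = (fst G - {v},
     {e \<in> snd G. v \<notin> e} \<union> {{x, y} | x y. x \<in> nbhd G v \<and> y \<in> nbhd G v \<and> x \<noteq> y})"

end

theory Submission
  imports Defs
begin

lemma coe_univ: "co_even_dominating_set G (fst G)"
  unfolding co_even_dominating_set_def dominating_set_def by auto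

lemma gamma_le:
  assumes "finite (fst G)" "co_even_dominating_set G D"
  shows "gamma_coe G \<le> card D"
proof -
  have "{D. co_even_dominating_set G D} \<subseteq> Pow (fst G)"
    by (auto simp: co_even_dominating_set_def dominating_set_def)
  hence "finite (card ` {D. co_even_dominating_set G D})"
    using assms(1) by (meson finite_Pow_iff finite_imageI finite_subset)
  thus ?thesis unfolding gamma_coe_def using assms(2) by auto
qed

lemma gamma_ex:
  assumes "finite (fst G)"
  shows "\<exists>D. co_even_dominating_set G D \<and> card D = gamma_coe G"
proof -
  have "{D. co_even_dominating_set G D} \<subseteq> Pow (fst G)"
    by (auto simp: co_even_dominating_set_def dominating_set_def)
  hence "finite (card ` {D. co_even_dominating_set G D})"
    using assms(1) by (meson finite_Pow_iff finite_imageI finite_subset)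
  moreover have "card ` {D. co_even_dominating_set G D} \<noteq> {}" using coe_univ by blast
  ultimately have "gamma_coe G \<in> card ` {D. co_even_dominating_set G D}"
    unfolding gamma_coe_def by (rule Min_in)
  thus ?thesis by auto
qed

locale trans_setup =
  fixes G H :: "'a graph" and v :: 'a
  assumes sg: "simple_graph G" and vV: "v \<in> fst G"
  and fstH: "fst H = fst G - {v}"
  and edgeH: "\<And>u w. w \<in> fst G \<Longrightarrow> w \<noteq> v \<Longrightarrow> w \<notin> nbhd G v \<Longrightarrow> u \<noteq> v \<Longrightarrow>
        ({u,w} \<in> snd H \<longleftrightarrow> {u,w} \<in> snd G)"
begin

lemma nb: "w \<in> fst G \<Longrightarrow> w \<noteq> v \<Longrightarrow> w \<notin> nbhd G v \<Longrightarrow> nbhd H w = nbhd G w"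
proof -
  assume w: "w \<in> fst G" "w \<noteq> v" "w \<notin> nbhd G v"
  have vw: "{v,w} \<notin> snd G" using w by (auto simp: nbhd_def insert_commute)
  show ?thesis
  proof (rule set_eqI)
    fix u
    show "u \<in> nbhd H w \<longleftrightarrow> u \<in> nbhd G w"
    proof (cases "u = v")
      case True thus ?thesis using vw by (simp add: nbhd_def fstH)
    next
      case False thus ?thesis using edgeH[OF w False] by (simp add: nbhd_def fstH)
    qed
  qed
qed

lemma deg: "w \<in> fst G \<Longrightarrow> w \<noteq> v \<Longrightarrow> w \<notin> nbhd G v \<Longrightarrow> degree H w = degree G w"
  unfolding degree_def using nb by simp

lemma finN: "finite (nbhd G v)"
  using sg unfolding simple_graph_def nbhd_def by auto

lemma finV: "finite (fst G)"
  using sg unfolding simple_graph_def by auto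

lemma HtoG:
  assumes "co_even_dominating_set H D"
  shows "co_even_dominating_set G (D \<union> nbhd G v \<union> {v})"
        "card (D \<union> nbhd G v \<union> {v}) \<le> card D + degree G v + 1"
proof -
  have DV: "D \<subseteq> fst G - {v}" using assms fstH
    by (auto simp: co_even_dominating_set_def dominating_set_def)
  have fD: "finite D" using DV finV by (meson finite_Diff finite_subset)
  show "card (D \<union> nbhd G v \<union> {v}) \<le> card D + degree G v + 1"
  proof -
    have "card (D \<union> nbhd G v \<union> {v}) \<le> card (D \<union> nbhd G v) + card {v}" by (rule card_Un_le)
    moreover have "card (D \<union> nbhd G v) \<le> card D + card (nbhd G v)" by (rule card_Un_le)
    ultimately show ?thesis by (simp add: degree_def)
  qed
  show "co_even_dominating_set G (D \<union> nbhd G v \<union> {v})"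
    unfolding co_even_dominating_set_def dominating_set_def
  proof (intro conjI ballI)
    show "D \<union> nbhd G v \<union> {v} \<subseteq> fst G" using DV vV by (auto simp: nbhd_def)
  next
    fix w assume w: "w \<in> fst G - (D \<union> nbhd G v \<union> {v})"
    hence "w \<in> fst H - D" using fstH by auto
    then obtain u where u: "u \<in> D" "{u,w} \<in> snd H" using assms
      unfolding co_even_dominating_set_def dominating_set_def by blast
    have "u \<noteq> v" using u DV by auto
    hence "{u,w} \<in> snd G" using edgeH[of w u] w u by auto
    thus "\<exists>u\<in>D \<union> nbhd G v \<union> {v}. {u, w} \<in> snd G" using u by auto
  next
    fix w assume w: "w \<in> fst G - (D \<union> nbhd G v \<union> {v})"
    hence "w \<in> fst H - D" using fstH by auto
    hence "even (degree H w)" using assms by (auto simp: co_even_dominating_set_def)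
    thus "even (degree G w)" using deg w by auto
  qed
qed

lemma GtoH:
  assumes "co_even_dominating_set G D"
  shows "co_even_dominating_set H ((D - {v}) \<union> nbhd G v)"
        "card ((D - {v}) \<union> nbhd G v) + 1 \<le> card D + degree G v"
proof -
  have DV: "D \<subseteq> fst G" using assms
    by (auto simp: co_even_dominating_set_def dominating_set_def)
  have fD: "finite D" using DV finV by (meson finite_subset)
  show "card ((D - {v}) \<union> nbhd G v) + 1 \<le> card D + degree G v"
  proof (cases "v \<in> D")
    case True
    have "card ((D - {v}) \<union> nbhd G v) \<le> card (D - {v}) + card (nbhd G v)"
      by (rule card_Un_le)
    moreover have "card (D - {v}) + 1 = card D" using True fD
      by (metis One_nat_def Suc_pred card_Diff_singleton card_gt_0_iff empty_iff add.right_neutral add_Suc_right)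
    ultimately show ?thesis unfolding degree_def by linarith
  next
    case False
    have "v \<in> fst G - D" using False vV by simp
    then obtain u where u: "u \<in> D" "{u,v} \<in> snd G" using assms
      unfolding co_even_dominating_set_def dominating_set_def by blast
    have uN: "u \<in> nbhd G v" using u DV by (auto simp: nbhd_def)
    have "(D - {v}) \<union> nbhd G v = D \<union> (nbhd G v - {u})" using False u uN by auto
    hence "card ((D - {v}) \<union> nbhd G v) \<le> card D + card (nbhd G v - {u})"
      using card_Un_le by metis
    moreover have "card (nbhd G v - {u}) + 1 = card (nbhd G v)" using uN finN
      by (metis One_nat_def Suc_pred card_Diff_singleton card_gt_0_iff empty_iff add.right_neutral add_Suc_right)
    ultimately show ?thesis unfolding degree_def by linarith
  qed
  show "co_even_dominating_set H ((D - {v}) \<union> nbhd G v)"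
    unfolding co_even_dominating_set_def dominating_set_def
  proof (intro conjI ballI)
    show "(D - {v}) \<union> nbhd G v \<subseteq> fst H" using DV fstH sg
      by (auto simp: nbhd_def simple_graph_def card_2_iff)
  next
    fix w assume w: "w \<in> fst H - ((D - {v}) \<union> nbhd G v)"
    hence w2: "w \<in> fst G - D" "w \<noteq> v" "w \<notin> nbhd G v" using fstH by auto
    then obtain u where u: "u \<in> D" "{u,w} \<in> snd G" using assms
      unfolding co_even_dominating_set_def dominating_set_def by blast
    have "u \<noteq> v" using u w2 by (auto simp: nbhd_def insert_commute)
    hence "{u,w} \<in> snd H" using edgeH[of w u] w2 u by auto
    thus "\<exists>u\<in>(D - {v}) \<union> nbhd G v. {u, w} \<in> snd H" using u \<open>u \<noteq> v\<close> by auto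
  next
    fix w assume w: "w \<in> fst H - ((D - {v}) \<union> nbhd G v)"
    hence w2: "w \<in> fst G - D" "w \<noteq> v" "w \<notin> nbhd G v" using fstH by auto
    hence "even (degree G w)" using assms by (auto simp: co_even_dominating_set_def)
    thus "even (degree H w)" using deg w2 by auto
  qed
qed

lemma bounds:
  "gamma_coe G \<le> gamma_coe H + degree G v + 1"
  "gamma_coe H + 1 \<le> gamma_coe G + degree G v"
proof -
  have fH: "finite (fst H)" using fstH finV by simp
  obtain D where D: "co_even_dominating_set H D" "card D = gamma_coe H"
    using gamma_ex[OF fH] by blast
  show "gamma_coe G \<le> gamma_coe H + degree G v + 1"
    using gamma_le[OF finV HtoG(1)[OF D(1)]] HtoG(2)[OF D(1)] D(2) by linarith
  obtain D where D: "co_even_dominating_set G D" "card D = gamma_coe G"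
    using gamma_ex[OF finV] by blast
  show "gamma_coe H + 1 \<le> gamma_coe G + degree G v"
    using gamma_le[OF fH GtoH(1)[OF D(1)]] GtoH(2)[OF D(1)] D(2) by linarith
qed

end

lemma del_setup: "simple_graph G \<Longrightarrow> v \<in> fst G \<Longrightarrow> trans_setup G (delete_vertex G v) v"
  unfolding trans_setup_def delete_vertex_def by auto

lemma con_setup: "simple_graph G \<Longrightarrow> v \<in> fst G \<Longrightarrow> trans_setup G (contract_vertex G v) v"
  unfolding trans_setup_def contract_vertex_def by (auto simp: doubleton_eq_iff)

theorem mainTheorem5:
  fixes G :: "'a graph" and v :: 'a
  assumes "simple_graph G" and "v \<in> fst G"
  shows "(real (gamma_coe (delete_vertex G v)) + real (gamma_coe (contract_vertex G v))) / 2
            - real (degree G v) + 1 \<le> real (gamma_coe G)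
         \<and> real (gamma_coe G) \<le>
           (real (gamma_coe (delete_vertex G v)) + real (gamma_coe (contract_vertex G v))) / 2
            + real (degree G v) + 1"
proof -
  note a = trans_setup.bounds[OF del_setup[OF assms]] trans_setup.bounds[OF con_setup[OF assms]]
  from a show ?thesis by (simp add: field_simps; linarith)
qed

end
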